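(* Let $(X,d)$ be a complete metric space, let $\alpha\in[0,1)$, let $T:X\to X$, and let $F:(0,\infty)\to\mathbb{R}$ be such that (1) $F$ is nondecreasing; (2) $F(s)>0$ for all $s>0$; (3) for all $x,y\in X$ with $Tx\neq Ty$, $F(d(Tx,Ty))\le\alpha F(d(x,y))$. Then $T$ is a Picard operator.
   Context: $T$ is a Picard operator if $T$ has a unique fixed point $u\in X$ and for every $x\in X$ the sequence $(T^nx)_{n\in\mathbb{N}}$ converges to $u$. *)

theory Defs
  imports "HOL-Analysis.Analysis"
begin

definition picard_operator :: "('a::metric_space \<Rightarrow> 'a) \<Rightarrow> bool" where
  "picard_operator T \<longleftrightarrow>
     (\<exists>u. T u = u \<and> (\<forall>v. T v = v \<longrightarrow> v = u) \<and>
          (\<forall>x. (\<lambda>n. (T ^^ n) x) \<longlonglongrightarrow> u))"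

end

theory Submission
  imports Defs
begin

lemma iter_bound:
  fixes T :: "'a::metric_space \<Rightarrow> 'a" and F :: "real \<Rightarrow> real"
  assumes a0: "0 \<le> \<alpha>"
    and c: "\<And>x y. T x \<noteq> T y \<Longrightarrow> F (dist (T x) (T y)) \<le> \<alpha> * F (dist x y)"
  shows "(T ^^ n) x = (T ^^ n) y \<or> F (dist ((T ^^ n) x) ((T ^^ n) y)) \<le> \<alpha> ^ n * F (dist x y)"
proof (induction n)
  case 0 then show ?case by simp
next
  case (Suc n)
  show ?case
  proof (cases "(T ^^ Suc n) x = (T ^^ Suc n) y")
    case False
    then have ne: "(T ^^ n) x \<noteq> (T ^^ n) y" by auto
    with Suc have h: "F (dist ((T ^^ n) x) ((T ^^ n) y)) \<le> \<alpha> ^ n * F (dist x y)" by blast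
    have "F (dist ((T ^^ Suc n) x) ((T ^^ Suc n) y)) \<le> \<alpha> * F (dist ((T ^^ n) x) ((T ^^ n) y))"
      using c False by simp
    also have "\<dots> \<le> \<alpha> * (\<alpha> ^ n * F (dist x y))" using h a0 by (simp add: mult_left_mono)
    finally show ?thesis by simp
  qed simp
qed

lemma small_step:
  fixes T :: "'a::metric_space \<Rightarrow> 'a" and F :: "real \<Rightarrow> real"
  assumes a0: "0 \<le> \<alpha>"
    and mono: "mono_on {0<..} F"
    and c: "\<And>x y. T x \<noteq> T y \<Longrightarrow> F (dist (T x) (T y)) \<le> \<alpha> * F (dist x y)"
    and e: "e > 0" and lt: "\<alpha> ^ n * F (dist x y) < F e"
  shows "dist ((T ^^ n) x) ((T ^^ n) y) < e"
proof (cases "(T ^^ n) x = (T ^^ n) y")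
  case True then show ?thesis using e by simp
next
  case False
  have h: "F (dist ((T ^^ n) x) ((T ^^ n) y)) \<le> \<alpha> ^ n * F (dist x y)"
    using iter_bound[of \<alpha> T F n x y] a0 c False by blast
  show ?thesis
  proof (rule ccontr)
    assume "\<not> ?thesis"
    then have "F e \<le> F (dist ((T ^^ n) x) ((T ^^ n) y))"
      using mono_onD[OF mono, of e "dist ((T ^^ n) x) ((T ^^ n) y)"] e False by simp
    with h lt show False by linarith
  qed
qed

lemma evt_small:
  fixes T :: "'a::metric_space \<Rightarrow> 'a" and F :: "real \<Rightarrow> real"
  assumes a0: "0 \<le> \<alpha>" and a1: "\<alpha> < 1"
    and mono: "mono_on {0<..} F"
    and pos: "\<And>s. s > 0 \<Longrightarrow> F s > 0"
    and c: "\<And>x y. T x \<noteq> T y \<Longrightarrow> F (dist (T x) (T y)) \<le> \<alpha> * F (dist x y)"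
    and e: "e > 0"
  shows "\<exists>N. \<forall>n\<ge>N. dist ((T ^^ n) x) ((T ^^ n) y) < e"
proof -
  have "(\<lambda>n. \<alpha> ^ n * F (dist x y)) \<longlonglongrightarrow> 0 * F (dist x y)"
    by (intro tendsto_mult tendsto_const LIMSEQ_power_zero) (use a0 a1 in auto)
  then have "eventually (\<lambda>n. \<alpha> ^ n * F (dist x y) < F e) sequentially"
    using pos[OF e] by (auto intro: order_tendstoD)
  then obtain N where N: "\<And>n. n \<ge> N \<Longrightarrow> \<alpha> ^ n * F (dist x y) < F e"
    by (auto simp: eventually_sequentially)
  show ?thesis
    using small_step[OF a0 mono c e N] by blast
qed

lemma orbit_cauchy:
  fixes T :: "'a::metric_space \<Rightarrow> 'a" and F :: "real \<Rightarrow> real"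
  assumes a0: "0 \<le> \<alpha>" and a1: "\<alpha> < 1"
    and mono: "mono_on {0<..} F"
    and pos: "\<And>s. s > 0 \<Longrightarrow> F s > 0"
    and c: "\<And>x y. T x \<noteq> T y \<Longrightarrow> F (dist (T x) (T y)) \<le> \<alpha> * F (dist x y)"
  shows "Cauchy (\<lambda>n. (T ^^ n) x)"
proof (rule metric_CauchyI)
  fix \<epsilon> :: real assume ep: "\<epsilon> > 0"
  define X where "X = (\<lambda>n. (T ^^ n) x)"
  have "(\<lambda>n. \<alpha> ^ n * F (2*\<epsilon>)) \<longlonglongrightarrow> 0 * F (2*\<epsilon>)"
    by (intro tendsto_mult tendsto_const LIMSEQ_power_zero) (use a0 a1 in auto)
  then have "eventually (\<lambda>n. \<alpha> ^ n * F (2*\<epsilon>) < F (\<epsilon>/2)) sequentially"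
    using pos[of "\<epsilon>/2"] ep by (auto intro: order_tendstoD)
  then obtain j0 where j0: "\<And>n. n \<ge> j0 \<Longrightarrow> \<alpha> ^ n * F (2*\<epsilon>) < F (\<epsilon>/2)"
    by (auto simp: eventually_sequentially)
  define j where "j = Suc j0"
  have j1: "j \<ge> 1" and jlt: "\<alpha> ^ j * F (2*\<epsilon>) < F (\<epsilon>/2)" using j0[of j] by (auto simp: j_def)
  have C: "dist ((T ^^ j) p) ((T ^^ j) q) < \<epsilon>/2" if "dist p q \<le> 2*\<epsilon>" for p q
  proof (cases "p = q")
    case True then show ?thesis using ep by simp
  next
    case False
    then have "F (dist p q) \<le> F (2*\<epsilon>)" using that mono ep by (auto intro: mono_onD)
    then have "\<alpha> ^ j * F (dist p q) \<le> \<alpha> ^ j * F (2*\<epsilon>)" using a0 by (simp add: mult_left_mono)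
    then show ?thesis using small_step[OF a0 mono c, of "\<epsilon>/2" j p q] jlt ep by linarith
  qed
  define \<delta> where "\<delta> = \<epsilon> / (2 * real j)"
  have dpos: "\<delta> > 0" using ep j1 by (simp add: \<delta>_def)
  have XS: "X (Suc n) = (T ^^ n) (T x)" for n unfolding X_def funpow.simps comp_apply by (rule funpow_swap1)
  obtain N where N0: "\<And>n. n \<ge> N \<Longrightarrow> dist ((T ^^ n) x) ((T ^^ n) (T x)) < \<delta>"
    using evt_small[OF a0 a1 mono pos c dpos, of x "T x"] by blast
  have N: "dist (X n) (X (Suc n)) < \<delta>" if "n \<ge> N" for n
    using N0[OF that] unfolding XS by (simp add: X_def)
  have steps: "dist (X n) (X (n + k)) \<le> real k * \<delta>" if "n \<ge> N" for n k
  proof (induction k)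
    case 0 then show ?case by simp
  next
    case (Suc k)
    have "dist (X n) (X (n + Suc k)) \<le> dist (X n) (X (n + k)) + dist (X (n+k)) (X (Suc (n + k)))"
      by (simp add: dist_triangle)
    also have "\<dots> \<le> real k * \<delta> + \<delta>" using Suc N[of "n+k"] that by fastforce
    finally show ?case by (simp add: algebra_simps)
  qed
  have jd: "real j * \<delta> = \<epsilon>/2" using j1 by (simp add: \<delta>_def)
  have main: "\<forall>m. m \<ge> n \<longrightarrow> dist (X n) (X m) < \<epsilon>" if nN: "n \<ge> N" for n
  proof (intro allI)
    fix m show "m \<ge> n \<longrightarrow> dist (X n) (X m) < \<epsilon>"
    proof (induction m rule: less_induct)
      case (less m)
      show ?case
      proof
        assume mn: "m \<ge> n"
        show "dist (X n) (X m) < \<epsilon>"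
        proof (cases "m < n + j")
          case True
          have "dist (X n) (X (n + (m - n))) \<le> real (m - n) * \<delta>" using steps nN by blast
          moreover have "real (m - n) * \<delta> \<le> real j * \<delta>" using True dpos by (intro mult_right_mono) auto
          ultimately show ?thesis using mn jd ep by simp
        next
          case False
          define i where "i = m - j"
          have im: "i < m" "i \<ge> n" "m = i + j" using False j1 by (auto simp: i_def)
          have "dist (X n) (X i) < \<epsilon>" using less im by blast
          then have "dist ((T ^^ j) (X n)) ((T ^^ j) (X i)) < \<epsilon>/2" using ep by (intro C) auto
          moreover have "(T ^^ j) (X k) = X (k + j)" for k
            by (simp add: X_def funpow_add add.commute)
          ultimately have h1: "dist (X (n + j)) (X m) < \<epsilon>/2" using im by simp
          have h2: "dist (X n) (X (n + j)) \<le> \<epsilon>/2" using steps[OF nN, of j] jd by simp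
          have "dist (X n) (X m) \<le> dist (X n) (X (n + j)) + dist (X (n + j)) (X m)"
            by (simp add: dist_triangle)
          then show ?thesis using h1 h2 by linarith
        qed
      qed
    qed
  qed
  show "\<exists>M. \<forall>m\<ge>M. \<forall>n\<ge>M. dist ((T ^^ m) x) ((T ^^ n) x) < \<epsilon>"
  proof (intro exI allI impI)
    fix m n assume "m \<ge> N" "n \<ge> N"
    then show "dist ((T ^^ m) x) ((T ^^ n) x) < \<epsilon>"
      using main[of m] main[of n] by (cases "m \<le> n") (auto simp: X_def dist_commute)
  qed
qed

theorem mainTheorem10:
  fixes T :: "'a::{metric_space, complete_space} \<Rightarrow> 'a"
    and F :: "real \<Rightarrow> real"
    and \<alpha> :: real
  assumes "0 \<le> \<alpha>" and "\<alpha> < 1"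
    and "mono_on {0<..} F"
    and "\<And>s. s > 0 \<Longrightarrow> F s > 0"
    and "\<And>x y. T x \<noteq> T y \<Longrightarrow> F (dist (T x) (T y)) \<le> \<alpha> * F (dist x y)"
  shows "picard_operator T"
proof -
  note a0 = assms(1) and a1 = assms(2) and mono = assms(3) and pos = assms(4) and c = assms(5)
  have lip: "dist (T p) (T q) \<le> dist p q" for p q
  proof (cases "T p = T q")
    case False
    then have pq: "p \<noteq> q" by auto
    have "F (dist (T p) (T q)) \<le> \<alpha> * F (dist p q)" using c False by blast
    also have "\<dots> < F (dist p q)" using pos[of "dist p q"] pq a1 by simp
    finally have lt: "F (dist (T p) (T q)) < F (dist p q)" .
    show ?thesis
    proof (rule ccontr)
      assume "\<not> ?thesis"
      then have "F (dist p q) \<le> F (dist (T p) (T q))" using mono_onD[OF mono, of "dist p q" "dist (T p) (T q)"] pq False by simp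
      with lt show False by simp
    qed
  qed simp
  have fix_lim: "T u = u" if L: "(\<lambda>n. (T ^^ n) x) \<longlonglongrightarrow> u" for x u
  proof -
    have "(\<lambda>n. T ((T ^^ n) x)) \<longlonglongrightarrow> T u"
    proof (rule metric_LIMSEQ_I)
      fix r :: real assume "r > 0"
      from metric_LIMSEQ_D[OF L this] obtain no where "\<forall>n\<ge>no. dist ((T ^^ n) x) u < r" by blast
      then show "\<exists>no. \<forall>n\<ge>no. dist (T ((T ^^ n) x)) (T u) < r"
        using lip by (meson order_le_less_trans)
    qed
    moreover have "(\<lambda>n. T ((T ^^ n) x)) \<longlonglongrightarrow> u"
      using LIMSEQ_Suc[OF L] by simp
    ultimately show ?thesis using LIMSEQ_unique by blast
  qed
  have uniq: "v = u" if "T u = u" "T v = v" for u v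
  proof (rule ccontr)
    assume ne: "v \<noteq> u"
    have "F (dist v u) \<le> \<alpha> * F (dist v u)" using c[of v u] that ne by simp
    moreover have "F (dist v u) > 0" using pos ne by simp
    ultimately show False using a1 by (simp add: mult_le_cancel_right1)
  qed
  have conv: "\<exists>u. (\<lambda>n. (T ^^ n) x) \<longlonglongrightarrow> u" for x
    using orbit_cauchy[OF a0 a1 mono pos c, of x] Cauchy_convergent convergent_def by blast
  obtain u where u: "(\<lambda>n. (T ^^ n) undefined) \<longlonglongrightarrow> u" using conv by blast
  show ?thesis
    unfolding picard_operator_def
  proof (intro exI conjI allI impI)
    show Tu: "T u = u" using fix_lim[OF u] .
    show "v = u" if "T v = v" for v using uniq Tu that by blast
    show "(\<lambda>n. (T ^^ n) x) \<longlonglongrightarrow> u" for x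
    proof -
      obtain w where w: "(\<lambda>n. (T ^^ n) x) \<longlonglongrightarrow> w" using conv by blast
      then have "w = u" using uniq[OF Tu fix_lim[OF w]] by simp
      with w show ?thesis by simp
    qed
  qed
qed

end
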